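(* Let $A$ be a unital alternative $*$-algebra over $\mathbb{C}$ with unit $1_A$, and let $n\ge 2$ be a fixed integer. Assume that $A$ contains a nontrivial symmetric idempotent $e$ (i.e. $e^2=e=e^*$, $e\neq 0$, $e\neq 1_A$) such that (i) if $x\in A$ and $(xa)e=0$ for all $a\in A$, then $x=0$; and (ii) if $x\in A$ and $(xa)(1_A-e)=0$ for all $a\in A$, then $x=0$. If a (not necessarily additive) map $\Phi:A\to A$ satisfies $$\Phi(a_1\bullet a_2\bullet\cdots\bullet a_n)=\sum_{k=1}^{n} a_1\bullet\cdots\bullet a_{k-1}\bullet\Phi(a_k)\bullet a_{k+1}\bullet\cdots\bullet a_n$$ for all $a_{n-1},a_n\in A$ and $a_i=1_A$ for all $i\in\{1,\dots,n-2\}$, then $\Phi$ is an additive $*$-derivation.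
   Context: An algebra $A$ (not necessarily associative) is alternative if $a^2b=a(ab)$ and $ba^2=(ba)a$ for all $a,b\in A$. An involution on $A$ is a map $*:A\to A$ with $(x+y)^*=x^*+y^*$, $(x^* )^*=x$, $(xy)^*=y^*x^*$; an alternative $*$-algebra is an alternative algebra with an involution. For $a,b\in A$ the Jordan $*$-product is $a\bullet b=ab+ba^*$, and iterated products are left-normed: $a_1\bullet a_2\bullet\cdots\bullet a_n=(\cdots((a_1\bullet a_2)\bullet a_3)\cdots)\bullet a_n$. A map $\Phi:A\to A$ is an additive $*$-derivation if $\Phi(a+b)=\Phi(a)+\Phi(b)$, $\Phi(ab)=\Phi(a)b+a\Phi(b)$ and $\Phi(a^* )=\Phi(a)^*$ for all $a,b\in A$. *)

theory Defs
  imports Complex_Main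
begin

definition complex_bilinear_mult ::
  "(complex \<Rightarrow> 'a::ab_group_add \<Rightarrow> 'a) \<Rightarrow> ('a \<Rightarrow> 'a \<Rightarrow> 'a) \<Rightarrow> bool" where
  "complex_bilinear_mult sc mult \<longleftrightarrow> vector_space sc \<and>
     (\<forall>a b c. mult (a + b) c = mult a c + mult b c) \<and>
     (\<forall>a b c. mult a (b + c) = mult a b + mult a c) \<and>
     (\<forall>(r::complex) a b. mult (sc r a) b = sc r (mult a b)) \<and>
     (\<forall>(r::complex) a b. mult a (sc r b) = sc r (mult a b))"

definition alternative :: "('a \<Rightarrow> 'a \<Rightarrow> 'a) \<Rightarrow> bool" where
  "alternative mult \<longleftrightarrow>
     (\<forall>a b. mult (mult a a) b = mult a (mult a b)) \<and>
     (\<forall>a b. mult b (mult a a) = mult (mult b a) a)"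

definition is_unit :: "('a \<Rightarrow> 'a \<Rightarrow> 'a) \<Rightarrow> 'a \<Rightarrow> bool" where
  "is_unit mult one \<longleftrightarrow> (\<forall>a. mult one a = a \<and> mult a one = a)"

definition involution :: "('a::plus \<Rightarrow> 'a \<Rightarrow> 'a) \<Rightarrow> ('a \<Rightarrow> 'a) \<Rightarrow> bool" where
  "involution mult star \<longleftrightarrow>
     (\<forall>x y. star (x + y) = star x + star y) \<and>
     (\<forall>x. star (star x) = x) \<and>
     (\<forall>x y. star (mult x y) = mult (star y) (star x))"

definition unital_alt_star_algebra ::
  "(complex \<Rightarrow> 'a::ab_group_add \<Rightarrow> 'a) \<Rightarrow> ('a \<Rightarrow> 'a \<Rightarrow> 'a) \<Rightarrow> ('a \<Rightarrow> 'a) \<Rightarrow> 'a \<Rightarrow> bool" where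
  "unital_alt_star_algebra sc mult star one \<longleftrightarrow>
     complex_bilinear_mult sc mult \<and> alternative mult \<and> is_unit mult one \<and> involution mult star"

definition jstar :: "('a::plus \<Rightarrow> 'a \<Rightarrow> 'a) \<Rightarrow> ('a \<Rightarrow> 'a) \<Rightarrow> 'a \<Rightarrow> 'a \<Rightarrow> 'a" where
  "jstar mult star a b = mult a b + mult b (star a)"

definition jprod :: "('a::plus \<Rightarrow> 'a \<Rightarrow> 'a) \<Rightarrow> ('a \<Rightarrow> 'a) \<Rightarrow> 'a list \<Rightarrow> 'a" where
  "jprod mult star as = foldl (jstar mult star) (hd as) (tl as)"

definition additive_star_derivation ::
  "('a::ab_group_add \<Rightarrow> 'a \<Rightarrow> 'a) \<Rightarrow> ('a \<Rightarrow> 'a) \<Rightarrow> ('a \<Rightarrow> 'a) \<Rightarrow> bool" where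
  "additive_star_derivation mult star \<Phi> \<longleftrightarrow>
     (\<forall>a b. \<Phi> (a + b) = \<Phi> a + \<Phi> b) \<and>
     (\<forall>a b. \<Phi> (mult a b) = mult (\<Phi> a) b + mult a (\<Phi> b)) \<and>
     (\<forall>a. \<Phi> (star a) = star (\<Phi> a))"

end

theory Submission
  imports Defs
begin


locale altstar =
  fixes sc :: "complex \<Rightarrow> 'a::ab_group_add \<Rightarrow> 'a"
    and mult :: "'a \<Rightarrow> 'a \<Rightarrow> 'a" (infixl "\<cdot>" 70)
    and star :: "'a \<Rightarrow> 'a" and one :: 'a
  assumes vs: "vector_space sc"
    and ladd: "(a + b) \<cdot> c = a \<cdot> c + b \<cdot> c"
    and radd: "a \<cdot> (b + c) = a \<cdot> b + a \<cdot> c"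
    and lsc: "sc r a \<cdot> b = sc r (a \<cdot> b)"
    and rsc: "a \<cdot> sc r b = sc r (a \<cdot> b)"
    and lalt: "(a \<cdot> a) \<cdot> b = a \<cdot> (a \<cdot> b)"
    and ralt: "b \<cdot> (a \<cdot> a) = (b \<cdot> a) \<cdot> a"
    and unitl[simp]: "one \<cdot> a = a" and unitr[simp]: "a \<cdot> one = a"
    and star_add: "star (x + y) = star x + star y"
    and star_star[simp]: "star (star x) = x"
    and star_mult: "star (x \<cdot> y) = star y \<cdot> star x"
begin

sublocale vs: vector_space sc by (rule vs)

lemma mult0l[simp]: "0 \<cdot> a = 0"
  using ladd[of 0 0 a] by simp
lemma mult0r[simp]: "a \<cdot> 0 = 0"
  using radd[of a 0 0] by simp
lemma lminus: "(- a) \<cdot> b = - (a \<cdot> b)"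
  using ladd[of a "-a" b] by (simp add: add_eq_0_iff)
lemma rminus: "a \<cdot> (- b) = - (a \<cdot> b)"
  using radd[of a b "-b"] by (simp add: add_eq_0_iff)
lemma ldiff: "(a - b) \<cdot> c = a \<cdot> c - b \<cdot> c"
  using ladd[of a "-b" c] by (simp add: lminus)
lemma rdiff: "a \<cdot> (b - c) = a \<cdot> b - a \<cdot> c"
  using radd[of a b "-c"] by (simp add: rminus)

lemmas ml = ladd radd lminus rminus ldiff rdiff lsc rsc

lemma star0[simp]: "star 0 = 0"
  using star_add[of 0 0] by simp
lemma star_minus: "star (- x) = - star x"
  using star_add[of x "-x"] by (simp add: add_eq_0_iff)
lemma star_diff: "star (x - y) = star x - star y"
  using star_add[of x "-y"] by (simp add: star_minus)
lemma star_one[simp]: "star one = one"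
proof -
  have "star one \<cdot> y = y" for y
    using star_mult[of "star y" one] by simp
  from this[of one] show ?thesis by simp
qed

lemma star_nat: "star (sc (of_nat k) x) = sc (of_nat k) (star x)"
  by (induction k) (simp_all add: vs.scale_left_distrib star_add)
lemma star_int: "star (sc (of_int k) x) = sc (of_int k) (star x)"
proof (cases k rule: int_cases2)
  case (nonneg n)
  then show ?thesis using star_nat[of n x] by simp
next
  case (nonpos n)
  then show ?thesis using star_nat[of n x] by (simp add: star_minus vs.scale_minus_left)
qed

lemma two_sc: "x + x = sc 2 x"
  using vs.scale_left_distrib[of 1 1 x] by simp

lemma double_zero: "(x::'a) + x = 0 \<Longrightarrow> x = 0"
  using two_sc[of x] vs.scale_eq_0_iff[of 2 x] by simp

lemma lalt_lin: "(a \<cdot> b) \<cdot> c - a \<cdot> (b \<cdot> c) + ((b \<cdot> a) \<cdot> c - b \<cdot> (a \<cdot> c)) = 0"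
proof -
  have "(a \<cdot> b) \<cdot> c - a \<cdot> (b \<cdot> c) + ((b \<cdot> a) \<cdot> c - b \<cdot> (a \<cdot> c)) =
    (((a+b)\<cdot>(a+b))\<cdot>c - (a+b)\<cdot>((a+b)\<cdot>c)) - ((a\<cdot>a)\<cdot>c - a\<cdot>(a\<cdot>c)) - ((b\<cdot>b)\<cdot>c - b\<cdot>(b\<cdot>c))"
    by (simp add: ladd radd algebra_simps)
  then show ?thesis by (simp add: lalt)
qed
lemma ralt_lin: "(a \<cdot> b) \<cdot> c - a \<cdot> (b \<cdot> c) + ((a \<cdot> c) \<cdot> b - a \<cdot> (c \<cdot> b)) = 0"
proof -
  have "(a \<cdot> b) \<cdot> c - a \<cdot> (b \<cdot> c) + ((a \<cdot> c) \<cdot> b - a \<cdot> (c \<cdot> b)) =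
    - ((a \<cdot> ((b+c)\<cdot>(b+c)) - (a\<cdot>(b+c))\<cdot>(b+c)) - (a \<cdot> (b\<cdot>b) - (a\<cdot>b)\<cdot>b) - (a \<cdot> (c\<cdot>c) - (a\<cdot>c)\<cdot>c))"
    by (simp add: ladd radd algebra_simps)
  then show ?thesis by (simp add: ralt)
qed
lemma flex: "(a \<cdot> b) \<cdot> a = a \<cdot> (b \<cdot> a)"
proof -
  have "(a \<cdot> b) \<cdot> a - a \<cdot> (b \<cdot> a) = ((a \<cdot> b) \<cdot> a - a \<cdot> (b \<cdot> a) + ((a \<cdot> a) \<cdot> b - a \<cdot> (a \<cdot> b)))
     - ((a \<cdot> a) \<cdot> b - a \<cdot> (a \<cdot> b))" by simp
  then show ?thesis using ralt_lin[of a b a] lalt[of a b] by simp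
qed

abbreviation jj (infixl "\<diamond>" 68) where "a \<diamond> b \<equiv> jstar (\<cdot>) star a b"

lemma jdef: "a \<diamond> b = a \<cdot> b + b \<cdot> star a" by (simp add: jstar_def)
lemma j_addl: "(a + b) \<diamond> c = a \<diamond> c + b \<diamond> c" by (simp add: jdef ml star_add algebra_simps)
lemma j_addr: "a \<diamond> (b + c) = a \<diamond> b + a \<diamond> c" by (simp add: jdef ml algebra_simps)
lemma j_minusl: "(- a) \<diamond> c = - (a \<diamond> c)" by (simp add: jdef ml star_minus)
lemma j_minusr: "a \<diamond> (- c) = - (a \<diamond> c)" by (simp add: jdef ml)
lemma j_diffl: "(a - b) \<diamond> c = a \<diamond> c - b \<diamond> c" by (simp add: jdef ml star_diff algebra_simps)
lemma j_diffr: "a \<diamond> (b - c) = a \<diamond> b - a \<diamond> c" by (simp add: jdef ml algebra_simps)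
lemma j_0l[simp]: "0 \<diamond> c = 0" by (simp add: jdef)
lemma j_0r[simp]: "a \<diamond> 0 = 0" by (simp add: jdef)
lemma j_scr: "a \<diamond> sc r b = sc r (a \<diamond> b)" by (simp add: jdef ml vs.scale_right_distrib)
lemma j_intl: "sc (of_int k) a \<diamond> b = sc (of_int k) (a \<diamond> b)" by (simp add: jdef ml star_int vs.scale_right_distrib)
lemma j_natl: "sc (of_nat k) a \<diamond> b = sc (of_nat k) (a \<diamond> b)" by (simp add: jdef ml star_nat vs.scale_right_distrib)
lemmas jl = j_addl j_addr j_minusl j_minusr j_diffl j_diffr j_scr

end

locale peirce = altstar +
  fixes e :: 'a
  assumes idem[simp]: "e \<cdot> e = e" and esym[simp]: "star e = e"
begin

lemma eex[simp]: "e \<cdot> (e \<cdot> x) = e \<cdot> x"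
  using lalt[of e x] by simp
lemma xee[simp]: "(x \<cdot> e) \<cdot> e = x \<cdot> e"
  using ralt[of x e] by simp
lemma exe: "(e \<cdot> x) \<cdot> e = e \<cdot> (x \<cdot> e)"
  by (rule flex)

lemma L1: "e \<cdot> (x \<cdot> y) = (e \<cdot> x) \<cdot> y + (x \<cdot> e) \<cdot> y - x \<cdot> (e \<cdot> y)"
  using lalt_lin[of e x y] by (simp add: algebra_simps)
lemma L2: "(x \<cdot> y) \<cdot> e = x \<cdot> (y \<cdot> e) - (x \<cdot> e) \<cdot> y + x \<cdot> (e \<cdot> y)"
  using ralt_lin[of x y e] by (simp add: algebra_simps)

definition comp :: "int \<Rightarrow> int \<Rightarrow> 'a \<Rightarrow> bool" where
  "comp \<alpha> \<beta> x \<longleftrightarrow> e \<cdot> x = sc (of_int \<alpha>) x \<and> x \<cdot> e = sc (of_int \<beta>) x"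

lemma comp_prod:
  assumes "comp \<alpha> \<beta> a" "comp \<gamma> \<eta> b"
  shows "e \<cdot> (a \<cdot> b) = sc (of_int (\<alpha> + \<beta> - \<gamma>)) (a \<cdot> b)"
    and "(a \<cdot> b) \<cdot> e = sc (of_int (\<gamma> + \<eta> - \<beta>)) (a \<cdot> b)"
  using assms unfolding comp_def
  by (simp_all add: L1 L2 lsc rsc vs.scale_left_distrib vs.scale_left_diff_distrib)

lemma Zl: assumes "e \<cdot> z = sc (of_int p) z" "p \<noteq> 0" "p \<noteq> 1" shows "z = 0"
proof -
  have A: "e \<cdot> (e \<cdot> z) = sc (of_int p) (sc (of_int p) z)" by (simp only: assms(1) rsc)
  have B: "e \<cdot> (e \<cdot> z) = sc (of_int p) z" using eex[of z] assms(1) by (rule trans)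
  have "sc (of_int (p*p)) z = sc (of_int p) z" using A B by (metis vs.scale_scale of_int_mult)
  then have "of_int (p*p) = (of_int p :: complex) \<or> z = 0" by simp
  moreover have "p * p \<noteq> p" using assms(2,3) by simp
  ultimately show ?thesis by (metis of_int_eq_iff)
qed
lemma Zr: assumes "z \<cdot> e = sc (of_int p) z" "p \<noteq> 0" "p \<noteq> 1" shows "z = 0"
proof -
  have A: "(z \<cdot> e) \<cdot> e = sc (of_int p) (sc (of_int p) z)" by (simp only: assms(1) lsc)
  have B: "(z \<cdot> e) \<cdot> e = sc (of_int p) z" using xee[of z] assms(1) by (rule trans)
  have "sc (of_int (p*p)) z = sc (of_int p) z" using A B by (metis vs.scale_scale of_int_mult)
  then have "of_int (p*p) = (of_int p :: complex) \<or> z = 0" by simp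
  moreover have "p * p \<noteq> p" using assms(2,3) by simp
  ultimately show ?thesis by (metis of_int_eq_iff)
qed
lemma Zneq: assumes "y = sc (of_int p) z" "y = sc (of_int q) z" "p \<noteq> q" shows "z = 0"
  using assms by simp

lemma comp_prod_in:
  assumes "comp \<alpha> \<beta> a" "comp \<gamma> \<eta> b"
  shows "comp (\<alpha> + \<beta> - \<gamma>) (\<gamma> + \<eta> - \<beta>) (a \<cdot> b)"
  using comp_prod[OF assms] unfolding comp_def by simp

lemma comp_prod_0:
  assumes "comp \<alpha> \<beta> a" "comp \<gamma> \<eta> b" "\<alpha> + \<beta> - \<gamma> \<notin> {0,1} \<or> \<gamma> + \<eta> - \<beta> \<notin> {0,1}"
  shows "a \<cdot> b = 0"
  using assms(3) Zl[OF comp_prod(1)[OF assms(1,2)]] Zr[OF comp_prod(2)[OF assms(1,2)]] by auto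

lemma comp_star: "comp \<alpha> \<beta> x \<Longrightarrow> comp \<beta> \<alpha> (star x)"
  unfolding comp_def
  by (metis esym star_int star_mult)

lemma comp_add: "comp \<alpha> \<beta> x \<Longrightarrow> comp \<alpha> \<beta> y \<Longrightarrow> comp \<alpha> \<beta> (x + y)"
  unfolding comp_def by (simp add: ml vs.scale_right_distrib)
lemma comp_sc: "comp \<alpha> \<beta> x \<Longrightarrow> comp \<alpha> \<beta> (sc r x)"
  unfolding comp_def by (simp add: ml vs.scale_left_commute)
lemma comp_0[simp]: "comp \<alpha> \<beta> 0"
  unfolding comp_def by simp
lemma comp_minus: "comp \<alpha> \<beta> x \<Longrightarrow> comp \<alpha> \<beta> (- x)"
  unfolding comp_def by (simp add: ml vs.scale_minus_right)

definition "p11 x = (e \<cdot> x) \<cdot> e"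
definition "p12 x = e \<cdot> x - (e \<cdot> x) \<cdot> e"
definition "p21 x = x \<cdot> e - (e \<cdot> x) \<cdot> e"
definition "p22 x = x - e \<cdot> x - x \<cdot> e + (e \<cdot> x) \<cdot> e"

lemma decomp: "x = p11 x + p12 x + p21 x + p22 x"
  unfolding p11_def p12_def p21_def p22_def by (simp add: algebra_simps)

lemma ex_eq: "e \<cdot> x = p11 x + p12 x" unfolding p11_def p12_def by simp
lemma xe_eq: "x \<cdot> e = p11 x + p21 x" unfolding p11_def p21_def by simp

lemma comp11: "comp 1 1 (p11 x)"
  unfolding comp_def p11_def by (simp add: exe flex[of e "x \<cdot> e", symmetric])
lemma comp12: "comp 1 0 (p12 x)"
  unfolding comp_def p12_def by (simp add: ml exe flex[of e "x \<cdot> e", symmetric])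
lemma comp21: "comp 0 1 (p21 x)"
  unfolding comp_def p21_def by (simp add: ml exe)
lemma comp22: "comp 0 0 (p22 x)"
  unfolding comp_def p22_def by (simp add: ml exe flex[of e "x \<cdot> e", symmetric])

lemma p11_c11[simp]: "comp 1 1 y \<Longrightarrow> p11 y = y"
  unfolding comp_def p11_def p12_def p21_def p22_def by simp
lemma p12_c11[simp]: "comp 1 1 y \<Longrightarrow> p12 y = 0"
  unfolding comp_def p11_def p12_def p21_def p22_def by simp
lemma p21_c11[simp]: "comp 1 1 y \<Longrightarrow> p21 y = 0"
  unfolding comp_def p11_def p12_def p21_def p22_def by simp
lemma p22_c11[simp]: "comp 1 1 y \<Longrightarrow> p22 y = 0"
  unfolding comp_def p11_def p12_def p21_def p22_def by simp
lemma p11_c12[simp]: "comp 1 0 y \<Longrightarrow> p11 y = 0"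
  unfolding comp_def p11_def p12_def p21_def p22_def by simp
lemma p12_c12[simp]: "comp 1 0 y \<Longrightarrow> p12 y = y"
  unfolding comp_def p11_def p12_def p21_def p22_def by simp
lemma p21_c12[simp]: "comp 1 0 y \<Longrightarrow> p21 y = 0"
  unfolding comp_def p11_def p12_def p21_def p22_def by simp
lemma p22_c12[simp]: "comp 1 0 y \<Longrightarrow> p22 y = 0"
  unfolding comp_def p11_def p12_def p21_def p22_def by simp
lemma p11_c21[simp]: "comp 0 1 y \<Longrightarrow> p11 y = 0"
  unfolding comp_def p11_def p12_def p21_def p22_def by simp
lemma p12_c21[simp]: "comp 0 1 y \<Longrightarrow> p12 y = 0"
  unfolding comp_def p11_def p12_def p21_def p22_def by simp
lemma p21_c21[simp]: "comp 0 1 y \<Longrightarrow> p21 y = y"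
  unfolding comp_def p11_def p12_def p21_def p22_def by simp
lemma p22_c21[simp]: "comp 0 1 y \<Longrightarrow> p22 y = 0"
  unfolding comp_def p11_def p12_def p21_def p22_def by simp
lemma p11_c22[simp]: "comp 0 0 y \<Longrightarrow> p11 y = 0"
  unfolding comp_def p11_def p12_def p21_def p22_def by simp
lemma p12_c22[simp]: "comp 0 0 y \<Longrightarrow> p12 y = 0"
  unfolding comp_def p11_def p12_def p21_def p22_def by simp
lemma p21_c22[simp]: "comp 0 0 y \<Longrightarrow> p21 y = 0"
  unfolding comp_def p11_def p12_def p21_def p22_def by simp
lemma p22_c22[simp]: "comp 0 0 y \<Longrightarrow> p22 y = y"
  unfolding comp_def p11_def p12_def p21_def p22_def by simp

lemma pp[simp]: "p11 (p11 x) = p11 x" "p12 (p11 x) = 0" "p21 (p11 x) = 0" "p22 (p11 x) = 0"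
  "p11 (p12 x) = 0" "p12 (p12 x) = p12 x" "p21 (p12 x) = 0" "p22 (p12 x) = 0"
  "p11 (p21 x) = 0" "p12 (p21 x) = 0" "p21 (p21 x) = p21 x" "p22 (p21 x) = 0"
  "p11 (p22 x) = 0" "p12 (p22 x) = 0" "p21 (p22 x) = 0" "p22 (p22 x) = p22 x"
  using comp11[of x] comp12[of x] comp21[of x] comp22[of x] by simp_all
lemma p11_add: "p11 (x + y) = p11 x + p11 y" unfolding p11_def by (simp add: ml algebra_simps)
lemma p11_diff: "p11 (x - y) = p11 x - p11 y" unfolding p11_def by (simp add: ml algebra_simps)
lemma p11_minus: "p11 (- x) = - p11 x" unfolding p11_def by (simp add: ml algebra_simps)
lemma p11_sc: "p11 (sc r x) = sc r (p11 x)" unfolding p11_def by (simp add: ml vs.scale_right_diff_distrib vs.scale_right_distrib)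
lemma p11_0[simp]: "p11 0 = 0" unfolding p11_def by simp
lemma p12_add: "p12 (x + y) = p12 x + p12 y" unfolding p12_def by (simp add: ml algebra_simps)
lemma p12_diff: "p12 (x - y) = p12 x - p12 y" unfolding p12_def by (simp add: ml algebra_simps)
lemma p12_minus: "p12 (- x) = - p12 x" unfolding p12_def by (simp add: ml algebra_simps)
lemma p12_sc: "p12 (sc r x) = sc r (p12 x)" unfolding p12_def by (simp add: ml vs.scale_right_diff_distrib vs.scale_right_distrib)
lemma p12_0[simp]: "p12 0 = 0" unfolding p12_def by simp
lemma p21_add: "p21 (x + y) = p21 x + p21 y" unfolding p21_def by (simp add: ml algebra_simps)
lemma p21_diff: "p21 (x - y) = p21 x - p21 y" unfolding p21_def by (simp add: ml algebra_simps)
lemma p21_minus: "p21 (- x) = - p21 x" unfolding p21_def by (simp add: ml algebra_simps)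
lemma p21_sc: "p21 (sc r x) = sc r (p21 x)" unfolding p21_def by (simp add: ml vs.scale_right_diff_distrib vs.scale_right_distrib)
lemma p21_0[simp]: "p21 0 = 0" unfolding p21_def by simp
lemma p22_add: "p22 (x + y) = p22 x + p22 y" unfolding p22_def by (simp add: ml algebra_simps)
lemma p22_diff: "p22 (x - y) = p22 x - p22 y" unfolding p22_def by (simp add: ml algebra_simps)
lemma p22_minus: "p22 (- x) = - p22 x" unfolding p22_def by (simp add: ml algebra_simps)
lemma p22_sc: "p22 (sc r x) = sc r (p22 x)" unfolding p22_def by (simp add: ml vs.scale_right_diff_distrib vs.scale_right_distrib)
lemma p22_0[simp]: "p22 0 = 0" unfolding p22_def by simp
lemmas padd = p11_add p12_add p21_add p22_add p11_diff p12_diff p21_diff p22_diff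
  p11_minus p12_minus p21_minus p22_minus p11_sc p12_sc p21_sc p22_sc

lemma p11_star: "p11 (star x) = star (p11 x)"
  unfolding p11_def by (simp add: star_mult flex)
lemma p12_star: "p12 (star x) = star (p21 x)"
  unfolding p12_def p21_def by (simp add: star_mult star_diff flex)
lemma p21_star: "p21 (star x) = star (p12 x)"
  unfolding p12_def p21_def by (simp add: star_mult star_diff flex)
lemma p22_star: "p22 (star x) = star (p22 x)"
  unfolding p22_def by (simp add: star_mult star_diff star_add flex)

lemma all0: "p11 t = 0 \<Longrightarrow> p12 t = 0 \<Longrightarrow> p21 t = 0 \<Longrightarrow> p22 t = 0 \<Longrightarrow> t = 0"
  using decomp[of t] by simp

lemma je: "e \<diamond> x = sc 2 (p11 x) + p12 x + p21 x"
  by (simp add: jdef ex_eq xe_eq two_sc[symmetric] algebra_simps)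
lemma j1e: "(one - e) \<diamond> x = p12 x + p21 x + sc 2 (p22 x)"
proof -
  have "(one - e) \<diamond> x = x + x - e \<cdot> x - x \<cdot> e" by (simp add: jdef ml star_diff algebra_simps)
  also have "... = p12 x + p21 x + sc 2 (p22 x)"
    by (subst (1 2) decomp[of x]) (simp add: ex_eq xe_eq two_sc[symmetric] algebra_simps)
  finally show ?thesis .
qed
lemma js: "(e + e - one) \<diamond> x = sc 2 (p11 x) - sc 2 (p22 x)"
proof -
  have "(e + e - one) \<diamond> x = e \<diamond> x + e \<diamond> x - one \<diamond> x" by (simp add: jl)
  also have "one \<diamond> x = x + x" by (simp add: jdef)
  finally show ?thesis
    by (subst (asm) (3 4) decomp[of x]) (simp add: je two_sc[symmetric] algebra_simps)
qed
lemma e_star: "e \<cdot> star x = star (x \<cdot> e)" by (simp add: star_mult)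
lemma star_e: "star x \<cdot> e = star (e \<cdot> x)" by (simp add: star_mult)
lemma jxe: "x \<diamond> e = p11 x + p21 x + star (p11 x) + star (p21 x)"
  by (simp add: jdef xe_eq e_star star_add add.assoc)
lemma jx1e: "x \<diamond> (one - e) = p12 x + p22 x + star (p12 x) + star (p22 x)"
proof -
  have "x \<diamond> (one - e) = (x - x \<cdot> e) + star (x - x \<cdot> e)"
    by (simp add: jdef ml star_diff star_mult)
  also have "x - x \<cdot> e = p12 x + p22 x"
    by (subst (1) decomp[of x]) (simp add: xe_eq)
  finally show ?thesis by (simp add: star_add add.assoc)
qed

lemma je0: assumes "e \<diamond> t = 0" shows "p11 t = 0" "p12 t = 0" "p21 t = 0"
proof -
  have h: "sc 2 (p11 t) + p12 t + p21 t = 0" using assms je by simp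
  have "p11 (sc 2 (p11 t) + p12 t + p21 t) = 0" "p12 (sc 2 (p11 t) + p12 t + p21 t) = 0"
    "p21 (sc 2 (p11 t) + p12 t + p21 t) = 0" by (simp_all only: h p11_0 p12_0 p21_0)
  then show "p11 t = 0" "p12 t = 0" "p21 t = 0" by (simp_all add: padd)
qed
lemma j1e0: assumes "(one - e) \<diamond> t = 0" shows "p12 t = 0" "p21 t = 0" "p22 t = 0"
proof -
  have h: "p12 t + p21 t + sc 2 (p22 t) = 0" using assms j1e by simp
  have "p12 (p12 t + p21 t + sc 2 (p22 t)) = 0" "p21 (p12 t + p21 t + sc 2 (p22 t)) = 0"
    "p22 (p12 t + p21 t + sc 2 (p22 t)) = 0" by (simp_all only: h p22_0 p12_0 p21_0)
  then show "p12 t = 0" "p21 t = 0" "p22 t = 0" by (simp_all add: padd)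
qed
lemma js0: assumes "(e + e - one) \<diamond> t = 0" shows "p11 t = 0" "p22 t = 0"
proof -
  have h: "sc 2 (p11 t) - sc 2 (p22 t) = 0" using assms js by simp
  have "p11 (sc 2 (p11 t) - sc 2 (p22 t)) = 0" "p22 (sc 2 (p11 t) - sc 2 (p22 t)) = 0"
    by (simp_all only: h p22_0 p11_0)
  then show "p11 t = 0" "p22 t = 0" by (simp_all add: padd)
qed
lemma jxe0: assumes "t \<diamond> e = 0" shows "p21 t = 0"
proof -
  have h: "p11 t + p21 t + star (p11 t) + star (p21 t) = 0" using assms jxe by simp
  have "p21 (p11 t + p21 t + star (p11 t) + star (p21 t)) = 0" by (simp only: h p21_0)
  then show "p21 t = 0"
    using comp_star[OF comp11[of t]] comp_star[OF comp21[of t]] by (simp add: padd)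
qed
lemma jx1e0: assumes "t \<diamond> (one - e) = 0" shows "p12 t = 0"
proof -
  have h: "p12 t + p22 t + star (p12 t) + star (p22 t) = 0" using assms jx1e by simp
  have "p12 (p12 t + p22 t + star (p12 t) + star (p22 t)) = 0" by (simp only: h p12_0)
  then show "p12 t = 0"
    using comp_star[OF comp12[of t]] comp_star[OF comp22[of t]] by (simp add: padd)
qed
end


locale setting = peirce +
  fixes \<Phi> :: "'a \<Rightarrow> 'a" and N :: complex and U :: 'a and K \<alpha> \<beta> :: nat
  assumes cond_i: "\<And>x. (\<forall>a. (x \<cdot> a) \<cdot> e = 0) \<Longrightarrow> x = 0"
    and cond_ii: "\<And>x. (\<forall>a. (x \<cdot> a) \<cdot> (one - e) = 0) \<Longrightarrow> x = 0"
    and H: "\<And>x y. \<Phi> (sc N (x \<diamond> y)) = (U \<diamond> x) \<diamond> y + sc N (\<Phi> x \<diamond> y) + sc N (x \<diamond> \<Phi> y)"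
    and NK: "N = of_nat K" and Kpos: "K > 0"
    and Uform: "U = sc (of_nat \<alpha>) (\<Phi> one) + sc (of_nat \<beta>) (star (\<Phi> one))"
begin

lemma Nne: "N \<noteq> 0" using NK Kpos by simp

lemma scN0: "sc N z = 0 \<Longrightarrow> z = 0" using Nne by simp

lemma Phi0[simp]: "\<Phi> 0 = 0"
  using H[of 0 0] by simp

lemma GA:
  assumes "\<Phi> (sc N (c \<diamond> a) + sc N (c \<diamond> b)) = \<Phi> (sc N (c \<diamond> a)) + \<Phi> (sc N (c \<diamond> b))"
  shows "c \<diamond> (\<Phi> (a + b) - \<Phi> a - \<Phi> b) = 0"
proof -
  have "\<Phi> (sc N (c \<diamond> (a + b))) = \<Phi> (sc N (c \<diamond> a)) + \<Phi> (sc N (c \<diamond> b))"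
    using assms by (simp add: jl vs.scale_right_distrib)
  then have "sc N (c \<diamond> (\<Phi> (a + b) - \<Phi> a - \<Phi> b)) = 0"
    unfolding H by (simp add: jl vs.scale_right_distrib vs.scale_right_diff_distrib algebra_simps)
  then show ?thesis by (rule scN0)
qed

lemma GB:
  assumes "\<Phi> (sc N (a \<diamond> c) + sc N (b \<diamond> c)) = \<Phi> (sc N (a \<diamond> c)) + \<Phi> (sc N (b \<diamond> c))"
  shows "(\<Phi> (a + b) - \<Phi> a - \<Phi> b) \<diamond> c = 0"
proof -
  have "\<Phi> (sc N ((a + b) \<diamond> c)) = \<Phi> (sc N (a \<diamond> c)) + \<Phi> (sc N (b \<diamond> c))"
    using assms by (simp add: jl vs.scale_right_distrib)
  then have "sc N ((\<Phi> (a + b) - \<Phi> a - \<Phi> b) \<diamond> c) = 0"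
    unfolding H by (simp add: jl vs.scale_right_distrib vs.scale_right_diff_distrib algebra_simps)
  then show ?thesis by (rule scN0)
qed

lemma GAk1: "c \<diamond> b = 0 \<Longrightarrow> c \<diamond> (\<Phi> (a + b) - \<Phi> a - \<Phi> b) = 0"
  by (rule GA) simp
lemma GAk2: "c \<diamond> a = 0 \<Longrightarrow> c \<diamond> (\<Phi> (a + b) - \<Phi> a - \<Phi> b) = 0"
  by (rule GA) simp
lemma GBk1: "b \<diamond> c = 0 \<Longrightarrow> (\<Phi> (a + b) - \<Phi> a - \<Phi> b) \<diamond> c = 0"
  by (rule GB) simp
lemma GBk2: "a \<diamond> c = 0 \<Longrightarrow> (\<Phi> (a + b) - \<Phi> a - \<Phi> b) \<diamond> c = 0"
  by (rule GB) simp


lemma comp1e: "comp 0 0 (one - e)"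
  unfolding comp_def by (simp add: ml)
lemma comp_e: "comp 1 1 e"
  unfolding comp_def by simp

lemma ks: "p11 b = 0 \<Longrightarrow> p22 b = 0 \<Longrightarrow> (e + e - one) \<diamond> b = 0"
  by (simp add: js)
lemma ke: "p11 b = 0 \<Longrightarrow> p12 b = 0 \<Longrightarrow> p21 b = 0 \<Longrightarrow> e \<diamond> b = 0"
  by (simp add: je)
lemma k1e: "p12 b = 0 \<Longrightarrow> p21 b = 0 \<Longrightarrow> p22 b = 0 \<Longrightarrow> (one - e) \<diamond> b = 0"
  by (simp add: j1e)
lemma kxe: "p11 b = 0 \<Longrightarrow> p21 b = 0 \<Longrightarrow> b \<diamond> e = 0"
  by (simp add: jxe)
lemma kx1e: "p12 b = 0 \<Longrightarrow> p22 b = 0 \<Longrightarrow> b \<diamond> (one - e) = 0"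
  by (simp add: jx1e)

lemma S1: assumes "comp 1 0 a" "comp 0 1 b" shows "\<Phi> (a + b) = \<Phi> a + \<Phi> b"
proof -
  let ?t = "\<Phi> (a + b) - \<Phi> a - \<Phi> b"
  have "(e + e - one) \<diamond> ?t = 0" by (rule GAk2) (rule ks, simp_all add: assms)
  then have 1: "p11 ?t = 0" "p22 ?t = 0" by (rule js0)+
  have "?t \<diamond> e = 0" by (rule GBk2) (rule kxe, simp_all add: assms)
  then have 2: "p21 ?t = 0" by (rule jxe0)
  have "?t \<diamond> (one - e) = 0" by (rule GBk1) (rule kx1e, simp_all add: assms)
  then have 3: "p12 ?t = 0" by (rule jx1e0)
  have "?t = 0" by (rule all0) (simp_all add: 1 2 3)
  then show ?thesis by (simp add: algebra_simps)
qed

lemma S2: assumes "comp 1 1 a" "comp 1 0 b" "comp 0 1 c" shows "\<Phi> (a + (b + c)) = \<Phi> a + \<Phi> (b + c)"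
proof -
  let ?t = "\<Phi> (a + (b + c)) - \<Phi> a - \<Phi> (b + c)"
  have "(one - e) \<diamond> ?t = 0" by (rule GAk2) (rule k1e, simp_all add: assms)
  then have 1: "p12 ?t = 0" "p21 ?t = 0" "p22 ?t = 0" by (rule j1e0)+
  have "(e + e - one) \<diamond> ?t = 0" by (rule GAk1) (rule ks, simp_all add: assms padd)
  then have 2: "p11 ?t = 0" by (rule js0)
  have "?t = 0" by (rule all0) (simp_all add: 1 2)
  then show ?thesis by (simp add: algebra_simps)
qed

lemma S2': assumes "comp 0 0 a" "comp 1 0 b" "comp 0 1 c" shows "\<Phi> (a + (b + c)) = \<Phi> a + \<Phi> (b + c)"
proof -
  let ?t = "\<Phi> (a + (b + c)) - \<Phi> a - \<Phi> (b + c)"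
  have "e \<diamond> ?t = 0" by (rule GAk2) (rule ke, simp_all add: assms)
  then have 1: "p11 ?t = 0" "p12 ?t = 0" "p21 ?t = 0" by (rule je0)+
  have "(e + e - one) \<diamond> ?t = 0" by (rule GAk1) (rule ks, simp_all add: assms padd)
  then have 2: "p22 ?t = 0" by (rule js0)
  have "?t = 0" by (rule all0) (simp_all add: 1 2)
  then show ?thesis by (simp add: algebra_simps)
qed

lemma S4: assumes "comp 1 1 a" "comp 0 0 d" shows "\<Phi> (a + d) = \<Phi> a + \<Phi> d"
proof -
  let ?t = "\<Phi> (a + d) - \<Phi> a - \<Phi> d"
  have "(one - e) \<diamond> ?t = 0" by (rule GAk2) (rule k1e, simp_all add: assms)
  then have 1: "p12 ?t = 0" "p21 ?t = 0" "p22 ?t = 0" by (rule j1e0)+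
  have "e \<diamond> ?t = 0" by (rule GAk1) (rule ke, simp_all add: assms)
  then have 2: "p11 ?t = 0" by (rule je0)
  have "?t = 0" by (rule all0) (simp_all add: 1 2)
  then show ?thesis by (simp add: algebra_simps)
qed

lemma S5: assumes "comp 1 1 a" "comp 1 0 b" "comp 0 1 c" "comp 0 0 d"
  shows "\<Phi> (a + b + c + d) = \<Phi> a + \<Phi> b + \<Phi> c + \<Phi> d"
proof -
  let ?x = "a + b + c + d"
  let ?t1 = "\<Phi> ((a + d) + (b + c)) - \<Phi> (a + d) - \<Phi> (b + c)"
  let ?t2 = "\<Phi> ((a + (b + c)) + d) - \<Phi> (a + (b + c)) - \<Phi> d"
  have "(e + e - one) \<diamond> ?t1 = 0" by (rule GAk1) (rule ks, simp_all add: assms padd)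
  then have 1: "p11 ?t1 = 0" "p22 ?t1 = 0" by (rule js0)+
  have "e \<diamond> ?t2 = 0" by (rule GAk1) (rule ke, simp_all add: assms)
  then have 2: "p11 ?t2 = 0" "p12 ?t2 = 0" "p21 ?t2 = 0" by (rule je0)+
  have x1: "(a + d) + (b + c) = ?x" by (simp only: add_ac)
  have x2: "(a + (b + c)) + d = ?x" by (simp only: add_ac)
  have e1: "?t1 = \<Phi> ?x - (\<Phi> a + \<Phi> b + \<Phi> c + \<Phi> d)"
    unfolding x1 S4[OF assms(1,4)] S1[OF assms(2,3)] by (simp only: diff_diff_eq add_ac)
  have e2: "?t2 = \<Phi> ?x - (\<Phi> a + \<Phi> b + \<Phi> c + \<Phi> d)"
    unfolding x2 S2[OF assms(1,2,3)] S1[OF assms(2,3)] by (simp only: diff_diff_eq add_ac)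
  have "\<Phi> ?x - (\<Phi> a + \<Phi> b + \<Phi> c + \<Phi> d) = 0"
    using 1 2 unfolding e1 e2 by - (rule all0, simp_all)
  then show ?thesis by (simp add: algebra_simps)
qed

lemma S5p: "\<Phi> x = \<Phi> (p11 x) + \<Phi> (p12 x) + \<Phi> (p21 x) + \<Phi> (p22 x)"
  using S5[OF comp11 comp12 comp21 comp22, of x x x x] decomp[of x] by simp

lemma dl12: assumes "comp 1 0 a" "comp 1 0 b"
  shows "p11 (\<Phi> (a + b) - \<Phi> a - \<Phi> b) = 0" "p21 (\<Phi> (a + b) - \<Phi> a - \<Phi> b) = 0"
    "p22 (\<Phi> (a + b) - \<Phi> a - \<Phi> b) = 0"
proof -
  let ?t = "\<Phi> (a + b) - \<Phi> a - \<Phi> b"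
  have "(e + e - one) \<diamond> ?t = 0" by (rule GAk2) (rule ks, simp_all add: assms)
  then show "p11 ?t = 0" "p22 ?t = 0" by (rule js0)+
  have "?t \<diamond> e = 0" by (rule GBk2) (rule kxe, simp_all add: assms)
  then show "p21 ?t = 0" by (rule jxe0)
qed

lemma dl21: assumes "comp 0 1 a" "comp 0 1 b"
  shows "p11 (\<Phi> (a + b) - \<Phi> a - \<Phi> b) = 0" "p12 (\<Phi> (a + b) - \<Phi> a - \<Phi> b) = 0"
    "p22 (\<Phi> (a + b) - \<Phi> a - \<Phi> b) = 0"
proof -
  let ?t = "\<Phi> (a + b) - \<Phi> a - \<Phi> b"
  have "(e + e - one) \<diamond> ?t = 0" by (rule GAk2) (rule ks, simp_all add: assms)
  then show "p11 ?t = 0" "p22 ?t = 0" by (rule js0)+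
  have "?t \<diamond> (one - e) = 0" by (rule GBk2) (rule kx1e, simp_all add: assms)
  then show "p12 ?t = 0" by (rule jx1e0)
qed


lemma Bilin:
  assumes "\<Phi> (x1 + x2) = \<Phi> x1 + \<Phi> x2" "\<Phi> (y1 + y2) = \<Phi> y1 + \<Phi> y2"
  shows "\<Phi> (sc N ((x1 + x2) \<diamond> (y1 + y2))) = \<Phi> (sc N (x1 \<diamond> y1)) + \<Phi> (sc N (x1 \<diamond> y2))
    + \<Phi> (sc N (x2 \<diamond> y1)) + \<Phi> (sc N (x2 \<diamond> y2))"
  unfolding H using assms by (simp add: jl vs.scale_right_distrib algebra_simps)

lemma S5': assumes "comp 1 1 a" "comp 1 0 b" "comp 0 1 c" "comp 0 0 d" "x = a + b + c + d"
  shows "\<Phi> x = \<Phi> a + \<Phi> b + \<Phi> c + \<Phi> d"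
  using S5[OF assms(1-4)] assms(5) by simp

lemma D12: assumes "comp 1 0 p" "comp 1 0 q" shows "\<Phi> (p + q) = \<Phi> p + \<Phi> q"
proof -
  define a where "a = sc (inverse N) p"
  define b where "b = sc (inverse N) q"
  have pa: "sc N a = p" and qb: "sc N b = q" using Nne by (simp_all add: a_def b_def)
  have ca: "comp 1 0 a" "comp 1 0 b" using assms comp_sc a_def b_def by auto
  have csa: "comp 0 1 (star a)" using comp_star[OF ca(1)] by simp
  have cab: "comp 0 1 (a \<cdot> b)" using comp_prod_in[OF ca(1) ca(2)] by simp
  have cbsa: "comp 1 1 (b \<cdot> star a)" using comp_prod_in[OF ca(2) csa] by simp
  have X: "\<Phi> (e + a) = \<Phi> e + \<Phi> a" using S5'[OF comp_e ca(1) comp_0 comp_0, of "e + a"] by simp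
  have Y: "\<Phi> ((one - e) + b) = \<Phi> (one - e) + \<Phi> b"
    using S5'[OF comp_0 ca(2) comp_0 comp1e, of "(one - e) + b"] by (simp add: add.commute)
  have B: "\<Phi> (sc N ((e + a) \<diamond> ((one - e) + b))) = \<Phi> (sc N (e \<diamond> (one - e))) + \<Phi> (sc N (e \<diamond> b))
    + \<Phi> (sc N (a \<diamond> (one - e))) + \<Phi> (sc N (a \<diamond> b))" by (rule Bilin[OF X Y])
  have f1: "e \<diamond> (one - e) = 0" using comp1e by (intro ke) simp_all
  have f2: "e \<diamond> b = b" using ca by (simp add: je)
  have f3: "a \<diamond> (one - e) = a + star a" using ca by (simp add: jx1e)
  have f4: "a \<diamond> b = a \<cdot> b + b \<cdot> star a" by (simp add: jdef)
  have XY: "(e + a) \<diamond> ((one - e) + b) = b + (a + star a) + (a \<cdot> b + b \<cdot> star a)"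
    unfolding j_addl j_addr f1 f2 f3 f4 by (simp add: add_ac)
  have L: "\<Phi> (sc N ((e + a) \<diamond> ((one - e) + b))) = \<Phi> (sc N (b \<cdot> star a)) + \<Phi> (sc N a + sc N b)
     + \<Phi> (sc N (star a) + sc N (a \<cdot> b)) + \<Phi> 0"
    by (rule S5'[OF comp_sc[OF cbsa] comp_add[OF comp_sc[OF ca(1)] comp_sc[OF ca(2)]]
        comp_add[OF comp_sc[OF csa] comp_sc[OF cab]] comp_0])
       (unfold XY, simp add: vs.scale_right_distrib add_ac)
  have R3: "\<Phi> (sc N (a \<diamond> (one - e))) = \<Phi> (sc N a) + \<Phi> (sc N (star a))"
    unfolding f3 vs.scale_right_distrib by (rule S1[OF comp_sc[OF ca(1)] comp_sc[OF csa]])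
  have R4: "\<Phi> (sc N (a \<diamond> b)) = \<Phi> (sc N (b \<cdot> star a)) + \<Phi> (sc N (a \<cdot> b))"
    by (rule S5'[OF comp_sc[OF cbsa] comp_0 comp_sc[OF cab] comp_0, simplified])
       (simp add: f4 vs.scale_right_distrib add_ac)
  define A' where "A' = sc N (star a)"
  define B' where "B' = sc N (a \<cdot> b)"
  have cA': "comp 0 1 A'" "comp 0 1 B'" unfolding A'_def B'_def using csa cab comp_sc by auto
  let ?t1 = "\<Phi> (p + q) - \<Phi> p - \<Phi> q"
  let ?t2 = "\<Phi> (A' + B') - \<Phi> A' - \<Phi> B'"
  have B2: "\<Phi> (sc N ((e + a) \<diamond> ((one - e) + b))) = \<Phi> q + (\<Phi> p + \<Phi> A') + (\<Phi> (sc N (b \<cdot> star a)) + \<Phi> B')"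
    using B unfolding f1 f2 R3 R4 by (simp add: pa qb A'_def B'_def)
  have L2: "\<Phi> (sc N ((e + a) \<diamond> ((one - e) + b))) = \<Phi> (sc N (b \<cdot> star a)) + \<Phi> (p + q) + \<Phi> (A' + B')"
    using L by (simp add: pa qb A'_def B'_def)
  have sum: "?t1 + ?t2 = 0"
    using B2 L2 by (simp add: algebra_simps)
  have d1: "p11 ?t1 = 0" "p21 ?t1 = 0" "p22 ?t1 = 0" using dl12[OF assms] by simp_all
  have d2: "p12 ?t2 = 0" using dl21[OF cA'] by simp_all
  have "p12 (?t1 + ?t2) = 0" unfolding sum by simp
  then have d3: "p12 ?t1 = 0" using d2 by (simp only: p12_add) simp
  have "?t1 = 0" by (rule all0) (simp_all add: d1 d3)
  then show ?thesis by (simp add: algebra_simps)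
qed

lemma killA11: assumes "comp 1 1 z" "\<And>c. comp 1 0 c \<Longrightarrow> z \<cdot> c = 0" shows "z = 0"
proof (rule cond_ii, rule allI)
  fix a
  have "z \<cdot> a = z \<cdot> p11 a + z \<cdot> p12 a + z \<cdot> p21 a + z \<cdot> p22 a"
    by (subst decomp[of a]) (simp add: radd)
  also have "z \<cdot> p12 a = 0" by (rule assms(2)[OF comp12])
  also have "z \<cdot> p21 a = 0" by (rule comp_prod_0[OF assms(1) comp21]) simp
  also have "z \<cdot> p22 a = 0" by (rule comp_prod_0[OF assms(1) comp22]) simp
  finally have za: "z \<cdot> a = z \<cdot> p11 a" by simp
  have "comp 1 1 (z \<cdot> p11 a)" using comp_prod_in[OF assms(1) comp11] by simp
  then show "(z \<cdot> a) \<cdot> (one - e) = 0" unfolding za comp_def by (simp add: rdiff)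
qed

lemma D11: assumes "comp 1 1 a" "comp 1 1 b" shows "\<Phi> (a + b) = \<Phi> a + \<Phi> b"
proof -
  let ?t = "\<Phi> (a + b) - \<Phi> a - \<Phi> b"
  have "(one - e) \<diamond> ?t = 0" by (rule GAk2) (rule k1e, simp_all add: assms)
  then have 1: "p12 ?t = 0" "p21 ?t = 0" "p22 ?t = 0" by (rule j1e0)+
  have t11: "comp 1 1 ?t" using decomp[of ?t] 1 comp11[of ?t] by simp
  have jc: "x \<diamond> c = x \<cdot> c" if "comp 1 1 x" "comp 1 0 c" for x c
  proof -
    have "c \<cdot> star x = 0" by (rule comp_prod_0[OF that(2) comp_star[OF that(1)]]) simp
    then show ?thesis by (simp add: jdef)
  qed
  have "?t \<cdot> c = 0" if c: "comp 1 0 c" for c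
  proof -
    have ac: "comp 1 0 (a \<cdot> c)" "comp 1 0 (b \<cdot> c)"
      using comp_prod_in[OF assms(1) c] comp_prod_in[OF assms(2) c] by simp_all
    have "?t \<diamond> c = 0"
      by (rule GB) (simp add: jc[OF assms(1) c] jc[OF assms(2) c] D12 comp_sc ac)
    then show ?thesis using jc[OF t11 c] by simp
  qed
  then have "?t = 0" using killA11[OF t11] by blast
  then show ?thesis by (simp add: algebra_simps)
qed


lemma flip: "setting sc (\<cdot>) star one (one - e) \<Phi> N U K \<alpha> \<beta>"
proof -
  have "peirce sc (\<cdot>) star one (one - e)"
    by (unfold_locales) (simp_all add: ml star_diff)
  moreover have "setting_axioms sc (\<cdot>) star one (one - e) \<Phi> N U K \<alpha> \<beta>"
  proof
    show "\<And>x. \<forall>a. x \<cdot> a \<cdot> (one - e) = 0 \<Longrightarrow> x = 0" by (rule cond_ii)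
    show "\<And>x. \<forall>a. x \<cdot> a \<cdot> (one - (one - e)) = 0 \<Longrightarrow> x = 0" using cond_i by simp
  qed (use H NK Kpos Uform in auto)
  ultimately show ?thesis by (intro setting.intro)
qed


lemma D21: assumes "comp 0 1 p" "comp 0 1 q" shows "\<Phi> (p + q) = \<Phi> p + \<Phi> q"
proof -
  interpret f: setting sc "(\<cdot>)" star one "one - e" \<Phi> N U K \<alpha> \<beta> by (rule flip)
  have "f.comp 1 0 p" "f.comp 1 0 q" using assms unfolding f.comp_def comp_def by (simp_all add: ml)
  then show ?thesis by (rule f.D12)
qed

lemma D22: assumes "comp 0 0 p" "comp 0 0 q" shows "\<Phi> (p + q) = \<Phi> p + \<Phi> q"
proof -
  interpret f: setting sc "(\<cdot>)" star one "one - e" \<Phi> N U K \<alpha> \<beta> by (rule flip)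
  have "f.comp 1 1 p" "f.comp 1 1 q" using assms unfolding f.comp_def comp_def by (simp_all add: ml)
  then show ?thesis by (rule f.D11)
qed

lemma additive: "\<Phi> (x + y) = \<Phi> x + \<Phi> y"
proof -
  have "\<Phi> (x + y) = \<Phi> (p11 x + p11 y) + \<Phi> (p12 x + p12 y) + \<Phi> (p21 x + p21 y) + \<Phi> (p22 x + p22 y)"
    using S5p[of "x + y"] by (simp add: padd)
  also have "... = (\<Phi> (p11 x) + \<Phi> (p12 x) + \<Phi> (p21 x) + \<Phi> (p22 x)) + (\<Phi> (p11 y) + \<Phi> (p12 y) + \<Phi> (p21 y) + \<Phi> (p22 y))"
    by (simp add: D11 D12 D21 D22 comp11 comp12 comp21 comp22 algebra_simps)
  also have "... = \<Phi> x + \<Phi> y" using S5p[of x] S5p[of y] by simp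
  finally show ?thesis .
qed

end


definition dlt :: "('b \<Rightarrow> 'b \<Rightarrow> 'b::ab_group_add) \<Rightarrow> ('b \<Rightarrow> 'b) \<Rightarrow> 'b \<Rightarrow> 'b \<Rightarrow> 'b" where
  "dlt m F a b = F (m a b) - m (F a) b - m a (F b)"

context setting
begin

lemma Phi_minus: "\<Phi> (- x) = - \<Phi> x"
  using additive[of x "-x"] by (simp add: add_eq_0_iff)
lemma Phi_diff: "\<Phi> (x - y) = \<Phi> x - \<Phi> y"
  using additive[of x "-y"] by (simp add: Phi_minus)
lemma Phi_nat: "\<Phi> (sc (of_nat k) x) = sc (of_nat k) (\<Phi> x)"
  by (induction k) (simp_all add: vs.scale_left_distrib additive)
lemma Phi_int: "\<Phi> (sc (of_int k) x) = sc (of_int k) (\<Phi> x)"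
proof (cases k rule: int_cases2)
  case (nonneg n)
  then show ?thesis using Phi_nat[of n x] by simp
next
  case (nonpos n)
  then show ?thesis using Phi_nat[of n x] by (simp add: Phi_minus vs.scale_minus_left)
qed
lemma Phi_N: "\<Phi> (sc N x) = sc N (\<Phi> x)"
  using Phi_nat NK by simp

lemma H': "sc N (\<Phi> (x \<diamond> y) - \<Phi> x \<diamond> y - x \<diamond> \<Phi> y) = (U \<diamond> x) \<diamond> y"
  using H[of x y] unfolding Phi_N by (simp add: vs.scale_right_diff_distrib algebra_simps)

lemma w_skew: "star (\<Phi> one) = - \<Phi> one"
proof -
  let ?w = "\<Phi> one"
  define v where "v = ?w + star ?w"
  have 1: "one \<diamond> one = one + one" by (simp add: jdef)
  have 2: "?w \<diamond> one = ?w + star ?w" by (simp add: jdef)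
  have 3: "one \<diamond> ?w = ?w + ?w" by (simp add: jdef)
  have 4: "U \<diamond> one = U + star U" by (simp add: jdef)
  have 5: "(U + star U) \<diamond> one = (U + star U) + (U + star U)" by (simp add: jdef star_add add_ac)
  have 6: "U + star U = sc (of_nat \<alpha>) v + sc (of_nat \<beta>) v"
    unfolding Uform v_def by (simp only: star_add star_nat star_star vs.scale_right_distrib add_ac)
  have "sc N (\<Phi> (one + one) - (?w + star ?w) - (?w + ?w)) = (U + star U) + (U + star U)"
    using H'[of one one] unfolding 1 2 3 4 5 .
  moreover have "\<Phi> (one + one) - (?w + star ?w) - (?w + ?w) = - v"
    unfolding v_def additive by (simp add: algebra_simps)
  ultimately have "sc N (- v) = sc (of_nat \<alpha>) v + sc (of_nat \<beta>) v + (sc (of_nat \<alpha>) v + sc (of_nat \<beta>) v)"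
    unfolding 6 by simp
  then have "sc N v + (sc (of_nat \<alpha>) v + sc (of_nat \<beta>) v + (sc (of_nat \<alpha>) v + sc (of_nat \<beta>) v)) = 0"
    by (simp add: vs.scale_minus_right add_eq_0_iff)
  then have "sc (N + (of_nat \<alpha> + of_nat \<beta> + (of_nat \<alpha> + of_nat \<beta>))) v = 0"
    by (simp only: vs.scale_left_distrib)
  moreover have "N + (of_nat \<alpha> + of_nat \<beta> + (of_nat \<alpha> + of_nat \<beta>)) \<noteq> (0::complex)"
  proof -
    have "N + (of_nat \<alpha> + of_nat \<beta> + (of_nat \<alpha> + of_nat \<beta>)) = of_nat (K + (\<alpha> + \<beta> + (\<alpha> + \<beta>)))"
      unfolding NK by simp
    then show ?thesis using Kpos by (simp only: of_nat_eq_0_iff)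
  qed
  ultimately have "v = 0" by simp
  then show ?thesis unfolding v_def by (simp add: add_eq_0_iff)
qed

lemma U_skew: "U + star U = 0"
  unfolding Uform by (simp add: star_add star_diff star_nat w_skew vs.scale_minus_right)

lemma w_central: "\<Phi> one \<cdot> y = y \<cdot> \<Phi> one"
proof -
  let ?w = "\<Phi> one"
  have "sc N (\<Phi> (y + y) - ?w \<diamond> y - (\<Phi> y + \<Phi> y)) = (U + star U) \<diamond> y"
    using H'[of one y] by (simp add: jdef)
  then have "sc N (- (?w \<diamond> y)) = 0" unfolding U_skew additive by simp
  then have "?w \<diamond> y = 0" using scN0 by (simp add: vs.scale_minus_right)
  then show ?thesis by (simp add: jdef w_skew rminus add_eq_0_iff)
qed

lemma U_j: "U \<diamond> x = 0"
proof -
  have "U = sc (of_nat \<alpha>) (\<Phi> one) - sc (of_nat \<beta>) (\<Phi> one)"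
    unfolding Uform w_skew by (simp add: vs.scale_minus_right)
  then have "U \<cdot> x = x \<cdot> U" by (simp add: ml w_central)
  moreover have "star U = - U" using U_skew by (simp add: add_eq_0_iff)
  ultimately show ?thesis by (simp add: jdef rminus)
qed

lemma J: "\<Phi> (x \<diamond> y) = \<Phi> x \<diamond> y + x \<diamond> \<Phi> y"
proof -
  have "sc N (\<Phi> (x \<diamond> y) - \<Phi> x \<diamond> y - x \<diamond> \<Phi> y) = 0" using H'[of x y] unfolding U_j by simp
  then have "\<Phi> (x \<diamond> y) - \<Phi> x \<diamond> y - x \<diamond> \<Phi> y = 0" by (rule scN0)
  then show ?thesis by (simp add: algebra_simps)
qed


lemma pprod:
  assumes "comp \<alpha>' \<beta>' a" "comp \<gamma> \<eta> b"
  shows "p11 (a \<cdot> b) = (if \<alpha>' + \<beta>' - \<gamma> = 1 \<and> \<gamma> + \<eta> - \<beta>' = 1 then a \<cdot> b else 0)"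
    and "p12 (a \<cdot> b) = (if \<alpha>' + \<beta>' - \<gamma> = 1 \<and> \<gamma> + \<eta> - \<beta>' = 0 then a \<cdot> b else 0)"
    and "p21 (a \<cdot> b) = (if \<alpha>' + \<beta>' - \<gamma> = 0 \<and> \<gamma> + \<eta> - \<beta>' = 1 then a \<cdot> b else 0)"
    and "p22 (a \<cdot> b) = (if \<alpha>' + \<beta>' - \<gamma> = 0 \<and> \<gamma> + \<eta> - \<beta>' = 0 then a \<cdot> b else 0)"
proof -
  let ?c1 = "\<alpha>' + \<beta>' - \<gamma>" and ?c2 = "\<gamma> + \<eta> - \<beta>'"
  have "(p11 (a \<cdot> b) = (if ?c1 = 1 \<and> ?c2 = 1 then a \<cdot> b else 0)) \<and>
        (p12 (a \<cdot> b) = (if ?c1 = 1 \<and> ?c2 = 0 then a \<cdot> b else 0)) \<and>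
        (p21 (a \<cdot> b) = (if ?c1 = 0 \<and> ?c2 = 1 then a \<cdot> b else 0)) \<and>
        (p22 (a \<cdot> b) = (if ?c1 = 0 \<and> ?c2 = 0 then a \<cdot> b else 0))"
  proof (cases "?c1 \<in> {0,1} \<and> ?c2 \<in> {0,1}")
    case True
    have c: "comp ?c1 ?c2 (a \<cdot> b)" by (rule comp_prod_in[OF assms])
    from True show ?thesis
    proof (elim conjE insertE emptyE)
      assume "?c1 = 0" "?c2 = 0" then show ?thesis using c by simp
    next
      assume "?c1 = 0" "?c2 = 1" then show ?thesis using c by simp
    next
      assume "?c1 = 1" "?c2 = 0" then show ?thesis using c by simp
    next
      assume "?c1 = 1" "?c2 = 1" then show ?thesis using c by simp
    qed
  next
    case False
    then have "a \<cdot> b = 0" using comp_prod_0[OF assms] by blast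
    then show ?thesis by simp
  qed
  then show "p11 (a \<cdot> b) = (if ?c1 = 1 \<and> ?c2 = 1 then a \<cdot> b else 0)"
    "p12 (a \<cdot> b) = (if ?c1 = 1 \<and> ?c2 = 0 then a \<cdot> b else 0)"
    "p21 (a \<cdot> b) = (if ?c1 = 0 \<and> ?c2 = 1 then a \<cdot> b else 0)"
    "p22 (a \<cdot> b) = (if ?c1 = 0 \<and> ?c2 = 0 then a \<cdot> b else 0)" by blast+
qed

lemma pw11: "p11 (\<Phi> one) = 0"
proof -
  let ?w = "\<Phi> one" and ?f = "\<Phi> e"
  have we: "?w \<cdot> e = e \<cdot> ?w" by (rule w_central)
  have a: "?f + ?f = ?f + star ?f + (e \<cdot> ?w + e \<cdot> ?w)"
    using J[of e one] by (simp add: jdef we additive)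
  then have sf: "star ?f = ?f - (e \<cdot> ?w + e \<cdot> ?w)" by (simp add: algebra_simps)
  have b: "?f + ?f = ?f \<cdot> e + e \<cdot> star ?f + (e \<cdot> ?f + ?f \<cdot> e)"
    using J[of e e] by (simp add: jdef additive)
  have "e \<cdot> star ?f = e \<cdot> ?f - (e \<cdot> ?w + e \<cdot> ?w)" unfolding sf by (simp add: ml)
  then have "sc 2 ?f = sc 2 (?f \<cdot> e + e \<cdot> ?f - e \<cdot> ?w)"
    using b by (simp add: two_sc[symmetric] algebra_simps)
  then have fe: "?f = ?f \<cdot> e + e \<cdot> ?f - e \<cdot> ?w" by simp
  have f22: "p22 ?f = 0"
    using arg_cong[OF fe, of p22] by (simp add: padd ex_eq xe_eq)
  have f11: "p11 ?f = p11 ?w"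
    using arg_cong[OF fe, of p11] by (simp add: padd ex_eq xe_eq)
  have "p11 ?w \<cdot> x = 0" if x: "comp 1 0 x" for x
  proof -
    have ex: "e \<diamond> x = x" using x by (simp add: je)
    have pe: "p12 (e \<diamond> g) = p12 g" for g by (simp add: je padd)
    have eq: "\<Phi> x = ?f \<cdot> x + x \<cdot> star ?f + e \<diamond> \<Phi> x"
      using J[of e x] unfolding ex by (simp add: jdef)
    have "p12 (\<Phi> x) = p12 (?f \<cdot> x) + p12 (x \<cdot> star ?f) + p12 (\<Phi> x)"
      using arg_cong[OF eq, of p12] by (simp only: p12_add pe)
    then have e1: "p12 (?f \<cdot> x) + p12 (x \<cdot> star ?f) = 0" by (simp add: algebra_simps)
    have e2: "p12 (?f \<cdot> x) = p11 ?f \<cdot> x"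
      apply (subst decomp[of ?f])
      using pprod(2)[OF comp11 x, of ?f] pprod(2)[OF comp12 x, of ?f] pprod(2)[OF comp21 x, of ?f]
      by (simp add: ladd padd f22)
    have e3: "p12 (x \<cdot> star ?f) = 0"
      apply (subst decomp[of "star ?f"])
      using pprod(2)[OF x comp11, of "star ?f"] pprod(2)[OF x comp12, of "star ?f"]
        pprod(2)[OF x comp21, of "star ?f"]
      by (simp add: radd padd p22_star f22)
    show ?thesis using e1 e2 e3 f11 by simp
  qed
  then show ?thesis using killA11[OF comp11] by blast
qed


lemma w0: "\<Phi> one = 0"
proof -
  interpret f: setting sc "(\<cdot>)" star one "one - e" \<Phi> N U K \<alpha> \<beta> by (rule flip)
  have "f.p11 (\<Phi> one) = 0" by (rule f.pw11)
  moreover have "f.p11 x = p22 x" for x unfolding f.p11_def p22_def by (simp add: ml algebra_simps)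
  ultimately have 1: "p22 (\<Phi> one) = 0" by simp
  have we: "e \<cdot> \<Phi> one = \<Phi> one \<cdot> e" by (rule w_central[symmetric])
  have 2: "p12 (\<Phi> one) = 0" unfolding p12_def we by simp
  have 3: "p21 (\<Phi> one) = 0" unfolding p21_def we by simp
  show ?thesis by (rule all0) (simp_all add: pw11 1 2 3)
qed

lemma U0: "U = 0" unfolding Uform w0 by simp

lemma star_pres: "\<Phi> (star x) = star (\<Phi> x)"
proof -
  have "\<Phi> (x + star x) = \<Phi> x + star (\<Phi> x)" using J[of x one] by (simp add: jdef w0)
  then show ?thesis by (simp add: additive)
qed

abbreviation \<delta> where "\<delta> a b \<equiv> dlt (\<cdot>) \<Phi> a b"

lemma R1: "\<delta> a b + \<delta> b (star a) = 0"
  using J[of a b] unfolding dlt_def by (simp add: jdef additive star_pres algebra_simps)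

lemma d_addl: "\<delta> (a + a') b = \<delta> a b + \<delta> a' b" unfolding dlt_def by (simp add: additive ml algebra_simps)
lemma d_addr: "\<delta> a (b + b') = \<delta> a b + \<delta> a b'" unfolding dlt_def by (simp add: additive ml algebra_simps)
lemma d_0l[simp]: "\<delta> 0 b = 0" unfolding dlt_def by simp
lemma d_0r[simp]: "\<delta> a 0 = 0" unfolding dlt_def by simp
lemma d_minusl: "\<delta> (- a) b = - \<delta> a b" unfolding dlt_def by (simp add: Phi_minus ml algebra_simps)
lemma d_diffl: "\<delta> (a - a') b = \<delta> a b - \<delta> a' b" unfolding dlt_def by (simp add: Phi_diff ml algebra_simps)
lemma d_intl: "\<delta> (sc (of_int k) a) b = sc (of_int k) (\<delta> a b)"
  unfolding dlt_def by (simp add: Phi_int ml vs.scale_right_diff_distrib)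
lemma d_intr: "\<delta> a (sc (of_int k) b) = sc (of_int k) (\<delta> a b)"
  unfolding dlt_def by (simp add: Phi_int ml vs.scale_right_diff_distrib)
lemma d_one: "\<delta> one b = 0" unfolding dlt_def by (simp add: w0)

lemma C1: "\<delta> x y \<cdot> z + \<delta> (x \<cdot> y) z - x \<cdot> \<delta> y z - \<delta> x (y \<cdot> z)
   + (\<delta> y x \<cdot> z + \<delta> (y \<cdot> x) z - y \<cdot> \<delta> x z - \<delta> y (x \<cdot> z)) = 0"
proof -
  have A: "\<Phi> ((x \<cdot> y) \<cdot> z) - \<Phi> (x \<cdot> (y \<cdot> z)) + (\<Phi> ((y \<cdot> x) \<cdot> z) - \<Phi> (y \<cdot> (x \<cdot> z))) = 0"
    using arg_cong[OF lalt_lin[of x y z], of \<Phi>] by (simp add: additive Phi_diff)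
  have "\<delta> x y \<cdot> z + \<delta> (x \<cdot> y) z - x \<cdot> \<delta> y z - \<delta> x (y \<cdot> z)
   + (\<delta> y x \<cdot> z + \<delta> (y \<cdot> x) z - y \<cdot> \<delta> x z - \<delta> y (x \<cdot> z)) =
    (\<Phi> ((x \<cdot> y) \<cdot> z) - \<Phi> (x \<cdot> (y \<cdot> z)) + (\<Phi> ((y \<cdot> x) \<cdot> z) - \<Phi> (y \<cdot> (x \<cdot> z))))
    - ((\<Phi> x \<cdot> y) \<cdot> z - \<Phi> x \<cdot> (y \<cdot> z) + ((y \<cdot> \<Phi> x) \<cdot> z - y \<cdot> (\<Phi> x \<cdot> z)))
    - ((x \<cdot> \<Phi> y) \<cdot> z - x \<cdot> (\<Phi> y \<cdot> z) + ((\<Phi> y \<cdot> x) \<cdot> z - \<Phi> y \<cdot> (x \<cdot> z)))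
    - ((x \<cdot> y) \<cdot> \<Phi> z - x \<cdot> (y \<cdot> \<Phi> z) + ((y \<cdot> x) \<cdot> \<Phi> z - y \<cdot> (x \<cdot> \<Phi> z)))"
    unfolding dlt_def by (simp add: ml algebra_simps)
  then show ?thesis unfolding A lalt_lin by simp
qed

lemma C2: "\<delta> a b \<cdot> c + \<delta> (a \<cdot> b) c - a \<cdot> \<delta> b c - \<delta> a (b \<cdot> c)
   + (\<delta> a c \<cdot> b + \<delta> (a \<cdot> c) b - a \<cdot> \<delta> c b - \<delta> a (c \<cdot> b)) = 0"
proof -
  have A: "\<Phi> ((a \<cdot> b) \<cdot> c) - \<Phi> (a \<cdot> (b \<cdot> c)) + (\<Phi> ((a \<cdot> c) \<cdot> b) - \<Phi> (a \<cdot> (c \<cdot> b))) = 0"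
    using arg_cong[OF ralt_lin[of a b c], of \<Phi>] by (simp add: additive Phi_diff)
  have "\<delta> a b \<cdot> c + \<delta> (a \<cdot> b) c - a \<cdot> \<delta> b c - \<delta> a (b \<cdot> c)
   + (\<delta> a c \<cdot> b + \<delta> (a \<cdot> c) b - a \<cdot> \<delta> c b - \<delta> a (c \<cdot> b)) =
    (\<Phi> ((a \<cdot> b) \<cdot> c) - \<Phi> (a \<cdot> (b \<cdot> c)) + (\<Phi> ((a \<cdot> c) \<cdot> b) - \<Phi> (a \<cdot> (c \<cdot> b))))
    - ((\<Phi> a \<cdot> b) \<cdot> c - \<Phi> a \<cdot> (b \<cdot> c) + ((\<Phi> a \<cdot> c) \<cdot> b - \<Phi> a \<cdot> (c \<cdot> b)))
    - ((a \<cdot> \<Phi> b) \<cdot> c - a \<cdot> (\<Phi> b \<cdot> c) + ((a \<cdot> c) \<cdot> \<Phi> b - a \<cdot> (c \<cdot> \<Phi> b)))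
    - ((a \<cdot> b) \<cdot> \<Phi> c - a \<cdot> (b \<cdot> \<Phi> c) + ((a \<cdot> \<Phi> c) \<cdot> b - a \<cdot> (\<Phi> c \<cdot> b)))"
    unfolding dlt_def by (simp add: ml algebra_simps)
  then show ?thesis unfolding A ralt_lin by simp
qed


lemma de0: "\<delta> e e = 0"
  using R1[of e e] by simp (rule double_zero)

lemma DA: "e \<cdot> \<delta> e z = \<delta> e z - \<delta> e (e \<cdot> z)"
proof -
  have "(\<delta> e z - e \<cdot> \<delta> e z - \<delta> e (e \<cdot> z)) + (\<delta> e z - e \<cdot> \<delta> e z - \<delta> e (e \<cdot> z)) = 0"
    using C1[of e e z] by (simp add: de0 algebra_simps)
  then have "\<delta> e z - e \<cdot> \<delta> e z - \<delta> e (e \<cdot> z) = 0" by (rule double_zero)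
  then show ?thesis by (simp add: algebra_simps)
qed

lemma DB: "\<delta> a e \<cdot> e = \<delta> a e - \<delta> (a \<cdot> e) e"
proof -
  have "(\<delta> a e \<cdot> e + \<delta> (a \<cdot> e) e - \<delta> a e) + (\<delta> a e \<cdot> e + \<delta> (a \<cdot> e) e - \<delta> a e) = 0"
    using C2[of a e e] by (simp add: de0 algebra_simps)
  then have "\<delta> a e \<cdot> e + \<delta> (a \<cdot> e) e - \<delta> a e = 0" by (rule double_zero)
  then show ?thesis by (simp add: algebra_simps)
qed

lemma Rex: "\<delta> x e = - \<delta> e x"
  using R1[of e x] by (simp add: add_eq_0_iff)

lemma Dstar: "\<delta> e (star x) = \<delta> e x"
  using R1[of x e] Rex[of x] by (simp add: add_eq_0_iff)

lemma Dcomp: assumes "comp a1 b1 x"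
  shows "e \<cdot> \<delta> e x = sc (of_int (1 - a1)) (\<delta> e x)" "\<delta> e x \<cdot> e = sc (of_int (1 - b1)) (\<delta> e x)"
proof -
  from assms have ex: "e \<cdot> x = sc (of_int a1) x" and xe: "x \<cdot> e = sc (of_int b1) x" by (simp_all add: comp_def)
  show "e \<cdot> \<delta> e x = sc (of_int (1 - a1)) (\<delta> e x)"
    unfolding DA ex d_intr by (simp add: vs.scale_left_diff_distrib)
  have "\<delta> x e \<cdot> e = sc (of_int (1 - b1)) (\<delta> x e)"
    unfolding DB xe d_intl by (simp add: vs.scale_left_diff_distrib)
  then show "\<delta> e x \<cdot> e = sc (of_int (1 - b1)) (\<delta> e x)"
    unfolding Rex by (simp add: lminus vs.scale_minus_right)
qed

lemma Doff: assumes "comp a1 b1 x" "a1 \<noteq> b1" shows "\<delta> e x = 0"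
proof -
  have 1: "e \<cdot> \<delta> e x = sc (of_int (1 - a1)) (\<delta> e x)" by (rule Dcomp(1)[OF assms(1)])
  have "e \<cdot> \<delta> e (star x) = sc (of_int (1 - b1)) (\<delta> e (star x))" by (rule Dcomp(1)[OF comp_star[OF assms(1)]])
  then have 2: "e \<cdot> \<delta> e x = sc (of_int (1 - b1)) (\<delta> e x)" unfolding Dstar .
  show ?thesis by (rule Zneq[OF 1 2]) (use assms(2) in simp)
qed

lemma D11e: assumes y: "comp 1 1 y" shows "\<delta> e y = 0"
proof -
  let ?f = "\<Phi> e" and ?z = "\<delta> e y"
  have cz: "comp 0 0 ?z" using Dcomp[OF y] unfolding comp_def by simp
  have ey: "e \<cdot> y = y" and ye: "y \<cdot> e = y" using y by (simp_all add: comp_def)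
  have pfy: "p22 (?f \<cdot> y) = 0"
    apply (subst decomp[of ?f])
    using pprod(4)[OF comp11 y, of ?f] pprod(4)[OF comp12 y, of ?f] pprod(4)[OF comp21 y, of ?f]
      pprod(4)[OF comp22 y, of ?f]
    by (simp add: ladd padd)
  have pyf: "p22 (y \<cdot> ?f) = 0"
    apply (subst decomp[of ?f])
    using pprod(4)[OF y comp11, of ?f] pprod(4)[OF y comp12, of ?f] pprod(4)[OF y comp21, of ?f]
      pprod(4)[OF y comp22, of ?f]
    by (simp add: radd padd)
  have z1: "p22 ?z = p22 (\<Phi> y)" unfolding dlt_def ey by (simp add: padd pfy ex_eq)
  have z2: "p22 (\<delta> y e) = p22 (\<Phi> y)" unfolding dlt_def ye by (simp add: padd pyf xe_eq)
  have m: "p22 (\<delta> y e) = - p22 ?z" unfolding Rex by (rule p22_minus)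
  have h: "p22 (\<Phi> y) = - p22 (\<Phi> y)"
  proof -
    have "p22 (\<Phi> y) = p22 (\<delta> y e)" using z2 by simp
    also have "... = - p22 ?z" by (rule m)
    also have "... = - p22 (\<Phi> y)" using z1 by simp
    finally show ?thesis .
  qed
  then have "p22 (\<Phi> y) + p22 (\<Phi> y) = 0" by (simp only: eq_neg_iff_add_eq_0[symmetric])
  then have "p22 (\<Phi> y) = 0" by (rule double_zero)
  then have "p22 ?z = 0" using z1 by simp
  then show ?thesis using cz by simp
qed

lemma D0: "\<delta> e x = 0"
proof -
  interpret f: setting sc "(\<cdot>)" star one "one - e" \<Phi> N U K \<alpha> \<beta> by (rule flip)
  have "f.comp 1 1 (p22 x)" using comp22[of x] unfolding f.comp_def comp_def by (simp add: ml)
  then have "\<delta> (one - e) (p22 x) = 0" by (rule f.D11e)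
  then have 4: "\<delta> e (p22 x) = 0" by (simp add: d_diffl d_one)
  have "\<delta> e x = \<delta> e (p11 x) + \<delta> e (p12 x) + \<delta> e (p21 x) + \<delta> e (p22 x)"
    by (subst decomp[of x]) (simp add: d_addr)
  then show ?thesis using D11e[OF comp11] Doff[OF comp12] Doff[OF comp21] 4 by simp
qed

lemma D0': "\<delta> x e = 0" using Rex[of x] D0[of x] by simp


lemma E1: "e \<cdot> \<delta> a b = \<delta> (e \<cdot> a + a \<cdot> e) b - \<delta> a (e \<cdot> b)"
  using C1[of e a b] by (simp add: D0 D0' d_addl algebra_simps)

lemma E2: "\<delta> a b \<cdot> e = \<delta> a (b \<cdot> e) - \<delta> (a \<cdot> e) b + \<delta> a (e \<cdot> b)"
  using C2[of a b e] by (simp add: D0 D0' algebra_simps)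

lemma dcomp: assumes "comp a1 b1 a" "comp c1 d1 b"
  shows "e \<cdot> \<delta> a b = sc (of_int (a1 + b1 - c1)) (\<delta> a b)"
    and "\<delta> a b \<cdot> e = sc (of_int (c1 + d1 - b1)) (\<delta> a b)"
proof -
  from assms have ea: "e \<cdot> a = sc (of_int a1) a" and ae: "a \<cdot> e = sc (of_int b1) a"
    and eb: "e \<cdot> b = sc (of_int c1) b" and be: "b \<cdot> e = sc (of_int d1) b" by (simp_all add: comp_def)
  show "e \<cdot> \<delta> a b = sc (of_int (a1 + b1 - c1)) (\<delta> a b)"
    unfolding E1 ea ae eb d_addl d_intl d_intr
    by (simp add: vs.scale_left_distrib vs.scale_left_diff_distrib)
  show "\<delta> a b \<cdot> e = sc (of_int (c1 + d1 - b1)) (\<delta> a b)"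
    unfolding E2 ae eb be d_intl d_intr
    by (simp add: vs.scale_left_distrib vs.scale_left_diff_distrib algebra_simps)
qed

lemma offdiag: assumes ca: "comp a1 b1 a" and cb: "comp c1 d1 b"
  and r: "a1 \<in> {0,1}" "b1 \<in> {0,1}" "c1 \<in> {0,1}" "d1 \<in> {0,1}"
  and nd: "\<not> (a1 = b1 \<and> b1 = c1 \<and> c1 = d1)"
  shows "\<delta> a b = 0"
proof (rule ccontr)
  let ?z = "\<delta> a b" and ?y = "\<delta> b (star a)"
  assume nz: "?z \<noteq> 0"
  have zy: "?y = - ?z" using R1[of a b] by (simp add: add_eq_0_iff)
  have csa: "comp b1 a1 (star a)" by (rule comp_star[OF ca])
  have 1: "e \<cdot> ?z = sc (of_int (a1 + b1 - c1)) ?z" by (rule dcomp(1)[OF ca cb])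
  have 2: "?z \<cdot> e = sc (of_int (c1 + d1 - b1)) ?z" by (rule dcomp(2)[OF ca cb])
  have "e \<cdot> ?y = sc (of_int (c1 + d1 - b1)) ?y" by (rule dcomp(1)[OF cb csa])
  then have 3: "e \<cdot> ?z = sc (of_int (c1 + d1 - b1)) ?z"
    unfolding zy by (simp add: rminus vs.scale_minus_right)
  have "?y \<cdot> e = sc (of_int (b1 + a1 - d1)) ?y" by (rule dcomp(2)[OF cb csa])
  then have 4: "?z \<cdot> e = sc (of_int (b1 + a1 - d1)) ?z"
    unfolding zy by (simp add: lminus vs.scale_minus_right)
  have "(of_int (a1 + b1 - c1) :: complex) = of_int (c1 + d1 - b1)" using 1 3 nz by simp
  then have h1: "a1 + b1 - c1 = c1 + d1 - b1" by (simp only: of_int_eq_iff)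
  have "(of_int (c1 + d1 - b1) :: complex) = of_int (b1 + a1 - d1)" using 2 4 nz by simp
  then have h2: "c1 + d1 - b1 = b1 + a1 - d1" by (simp only: of_int_eq_iff)
  show False using h1 h2 r nd by auto
qed

lemma diag11: assumes ca: "comp 1 1 a" and cb: "comp 1 1 b" shows "\<delta> a b = 0"
proof -
  let ?z = "\<delta> a b"
  have cz: "comp 1 1 ?z" using dcomp[OF ca cb] unfolding comp_def by simp
  have "?z \<cdot> c = 0" if cc: "comp 1 0 c" for c
  proof -
    have cab: "comp 1 1 (a \<cdot> b)" using comp_prod_in[OF ca cb] by simp
    have cbc: "comp 1 0 (b \<cdot> c)" using comp_prod_in[OF cb cc] by simp
    have cac: "comp 1 0 (a \<cdot> c)" using comp_prod_in[OF ca cc] by simp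
    have cb0: "c \<cdot> b = 0" by (rule comp_prod_0[OF cc cb]) simp
    have z1: "\<delta> (a \<cdot> b) c = 0" by (rule offdiag[OF cab cc]) simp_all
    have z2: "\<delta> b c = 0" by (rule offdiag[OF cb cc]) simp_all
    have z3: "\<delta> a (b \<cdot> c) = 0" by (rule offdiag[OF ca cbc]) simp_all
    have z4: "\<delta> a c = 0" by (rule offdiag[OF ca cc]) simp_all
    have z5: "\<delta> (a \<cdot> c) b = 0" by (rule offdiag[OF cac cb]) simp_all
    have z6: "\<delta> c b = 0" by (rule offdiag[OF cc cb]) simp_all
    show ?thesis using C2[of a b c] by (simp add: z1 z2 z3 z4 z5 z6 cb0)
  qed
  then show ?thesis using killA11[OF cz] by blast
qed

lemma diag22: assumes "comp 0 0 a" "comp 0 0 b" shows "\<delta> a b = 0"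
proof -
  interpret f: setting sc "(\<cdot>)" star one "one - e" \<Phi> N U K \<alpha> \<beta> by (rule flip)
  have "f.comp 1 1 a" "f.comp 1 1 b" using assms unfolding f.comp_def comp_def by (simp_all add: ml)
  then show ?thesis by (rule f.diag11)
qed

lemma dzero: "\<delta> a b = 0"
proof -
  have "\<delta> a b = \<delta> (p11 a + p12 a + p21 a + p22 a) (p11 b + p12 b + p21 b + p22 b)"
    using decomp[of a] decomp[of b] by simp
  also have "... = 0"
    unfolding d_addl d_addr
    using diag11[OF comp11 comp11] offdiag[OF comp11 comp12, simplified] offdiag[OF comp11 comp21, simplified] offdiag[OF comp11 comp22, simplified] offdiag[OF comp12 comp11, simplified] offdiag[OF comp12 comp12, simplified] offdiag[OF comp12 comp21, simplified] offdiag[OF comp12 comp22, simplified] offdiag[OF comp21 comp11, simplified] offdiag[OF comp21 comp12, simplified] offdiag[OF comp21 comp21, simplified] offdiag[OF comp21 comp22, simplified] offdiag[OF comp22 comp11, simplified] offdiag[OF comp22 comp12, simplified] offdiag[OF comp22 comp21, simplified] diag22[OF comp22 comp22]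
    by simp
  finally show ?thesis .
qed

lemma final: "additive_star_derivation (\<cdot>) star \<Phi>"
  unfolding additive_star_derivation_def
  using additive star_pres dzero unfolding dlt_def by (simp add: algebra_simps)

end


context altstar
begin

lemma star_pow: "star (sc ((2::complex)^m) x) = sc (2^m) (star x)"
  using star_nat[of "2^m" x] by simp
lemma j_powl: "sc ((2::complex)^m) a \<diamond> b = sc (2^m) (a \<diamond> b)"
  using j_natl[of "2^m" a b] by simp

lemma jprod_snoc: "xs \<noteq> [] \<Longrightarrow> jprod (\<cdot>) star (xs @ [y]) = jprod (\<cdot>) star xs \<diamond> y"
  by (cases xs) (simp_all add: jprod_def)

lemma jprod_ones: "jprod (\<cdot>) star (replicate (Suc j) one) = sc (2^j) one"
proof (induction j)
  case 0
  then show ?case by (simp add: jprod_def)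
next
  case (Suc j)
  have r: "replicate (Suc (Suc j)) one = replicate (Suc j) one @ [one]"
    by (metis replicate_Suc replicate_append_same)
  have "jprod (\<cdot>) star (replicate (Suc (Suc j)) one) = jprod (\<cdot>) star (replicate (Suc j) one) \<diamond> one"
    unfolding r by (rule jprod_snoc) simp
  also have "... = sc (2^j) one \<diamond> one" by (simp only: Suc)
  also have "... = sc (2^Suc j) one"
    by (simp add: jdef star_pow lsc two_sc)
  finally show ?case .
qed

lemma jprod_pre: "jprod (\<cdot>) star (replicate m one @ [x]) = sc (2^m) x"
proof (cases m)
  case 0
  then show ?thesis by (simp add: jprod_def)
next
  case (Suc j)
  then have "jprod (\<cdot>) star (replicate m one @ [x]) = jprod (\<cdot>) star (replicate (Suc j) one) \<diamond> x"
    using jprod_snoc[of "replicate m one" x] by simp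
  also have "... = sc (2^j) one \<diamond> x" by (simp only: jprod_ones)
  also have "... = sc (2^m) x"
    using Suc by (simp add: jdef star_pow lsc rsc two_sc)
  finally show ?thesis .
qed

lemma jprod_pre2: "jprod (\<cdot>) star (replicate m one @ [x, y]) = sc (2^m) (x \<diamond> y)"
proof -
  have "jprod (\<cdot>) star (replicate m one @ [x, y]) = jprod (\<cdot>) star ((replicate m one @ [x]) @ [y])" by simp
  also have "... = sc (2^m) x \<diamond> y" by (subst jprod_snoc) (simp_all add: jprod_pre)
  finally show ?thesis by (simp only: j_powl)
qed

lemma sum_jl: "(\<Sum>k<(m::nat). f k) \<diamond> x = (\<Sum>k<m. f k \<diamond> x)"
  by (induction m) (simp_all add: j_addl)

definition Qf :: "'a \<Rightarrow> 'a \<Rightarrow> bool" where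
  "Qf w v \<longleftrightarrow> (\<exists>a b::nat. v = sc (of_nat a) w + sc (of_nat b) (star w))"

lemma Qf_one: "Qf w v \<Longrightarrow> Qf w (v \<diamond> one)"
proof -
  assume "Qf w v"
  then obtain a b where v: "v = sc (of_nat a) w + sc (of_nat b) (star w)" unfolding Qf_def by blast
  have "v \<diamond> one = sc (of_nat (a + b)) w + sc (of_nat (a + b)) (star w)"
    unfolding v by (simp add: jdef star_add star_nat vs.scale_left_distrib algebra_simps)
  then show ?thesis unfolding Qf_def by blast
qed

lemma Qf_foldl: "Qf w v \<Longrightarrow> Qf w (foldl (\<diamond>) v (replicate j one))"
  by (induction j arbitrary: v) (simp_all add: Qf_one)

lemma Qf_sum: "(\<And>k. k < m \<Longrightarrow> Qf w (f k)) \<Longrightarrow> Qf w (\<Sum>k<(m::nat). f k)"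
proof (induction m)
  case 0
  then show ?case unfolding Qf_def by (rule_tac x=0 in exI, rule_tac x=0 in exI) simp
next
  case (Suc m)
  then obtain a b where 1: "(\<Sum>k<m. f k) = sc (of_nat a) w + sc (of_nat b) (star w)" unfolding Qf_def by force
  obtain c d where 2: "f m = sc (of_nat c) w + sc (of_nat d) (star w)" using Suc.prems[of m] unfolding Qf_def by force
  have "(\<Sum>k<Suc m. f k) = sc (of_nat (a + c)) w + sc (of_nat (b + d)) (star w)"
    by (simp add: 1 2 vs.scale_left_distrib algebra_simps)
  then show ?case unfolding Qf_def by blast
qed

lemma Qf_upd: assumes "k < m" shows "Qf w (jprod (\<cdot>) star ((replicate m one)[k := w]))"
proof -
  have r: "replicate m one = replicate k one @ one # replicate (m - Suc k) one"
    using assms by (simp add: replicate_add[symmetric] flip: replicate_Suc)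
  have upd: "(replicate m one)[k := w] = replicate k one @ w # replicate (m - Suc k) one"
    unfolding r using list_update_length[of "replicate k one" one "replicate (m - Suc k) one" w] by simp
  show ?thesis
  proof (cases k)
    case 0
    then have "jprod (\<cdot>) star ((replicate m one)[k := w]) = foldl (\<diamond>) w (replicate (m - Suc k) one)"
      unfolding upd by (simp add: jprod_def)
    moreover have "Qf w w" unfolding Qf_def by (rule_tac x=1 in exI, rule_tac x=0 in exI) simp
    ultimately show ?thesis using Qf_foldl by simp
  next
    case (Suc j)
    have upd': "(replicate m one)[k := w] = one # (replicate j one @ w # replicate (m - Suc k) one)"
      using upd Suc by (simp add: replicate_append_same)
    have eq: "jprod (\<cdot>) star ((replicate m one)[k := w]) =
        foldl (\<diamond>) (foldl (\<diamond>) one (replicate j one) \<diamond> w) (replicate (m - Suc k) one)"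
      unfolding upd' by (simp add: jprod_def)
    have "Qf w (foldl (\<diamond>) one (replicate j one) \<diamond> w)"
    proof -
      have "foldl (\<diamond>) one (replicate j one) = jprod (\<cdot>) star (replicate (Suc j) one)"
        by (simp add: jprod_def)
      then have "foldl (\<diamond>) one (replicate j one) \<diamond> w = sc (2^j) one \<diamond> w" by (simp only: jprod_ones)
      also have "... = sc (of_nat (2^Suc j)) w" by (simp add: jdef star_pow lsc rsc two_sc)
      finally show ?thesis unfolding Qf_def by (rule_tac x="2^Suc j" in exI, rule_tac x=0 in exI) simp
    qed
    then show ?thesis unfolding eq by (rule Qf_foldl)
  qed
qed

end

lemma altstar_from:
  assumes "unital_alt_star_algebra sc mult star one"
  shows "altstar sc mult star one"
  using assms unfolding unital_alt_star_algebra_def complex_bilinear_mult_def alternative_def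
    is_unit_def involution_def altstar_def by auto



theorem theorem1:
  fixes sc :: "complex \<Rightarrow> 'a::ab_group_add \<Rightarrow> 'a"
    and mult :: "'a \<Rightarrow> 'a \<Rightarrow> 'a"
    and star :: "'a \<Rightarrow> 'a" and one :: 'a and e :: 'a
    and \<Phi> :: "'a \<Rightarrow> 'a" and n :: nat
  assumes alg: "unital_alt_star_algebra sc mult star one"
    and n2: "n \<ge> 2"
    and e_idem: "mult e e = e" and e_sym: "star e = e"
    and e_nz: "e \<noteq> 0" and e_ne1: "e \<noteq> one"
    and cond_i: "\<And>x. (\<forall>a. mult (mult x a) e = 0) \<Longrightarrow> x = 0"
    and cond_ii: "\<And>x. (\<forall>a. mult (mult x a) (one - e) = 0) \<Longrightarrow> x = 0"
    and hyp: "\<And>x y. let as = replicate (n - 2) one @ [x, y] in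
               \<Phi> (jprod mult star as) = (\<Sum>k<n. jprod mult star (as[k := \<Phi> (as ! k)]))"
  shows "additive_star_derivation mult star \<Phi>"
proof -
  interpret A: altstar sc mult star one by (rule altstar_from[OF alg])
  define m where "m = n - 2"
  have nm: "n = Suc (Suc m)" using n2 m_def by simp
  define w where "w = \<Phi> one"
  define U where "U = (\<Sum>k<m. jprod mult star ((replicate m one)[k := w]))"
  have "A.Qf w U" unfolding U_def by (rule A.Qf_sum) (rule A.Qf_upd)
  then obtain \<alpha> \<beta> where Uf: "U = sc (of_nat \<alpha>) w + sc (of_nat \<beta>) (star w)" unfolding A.Qf_def by blast
  have H: "\<Phi> (sc (2^m) (jstar mult star x y)) = jstar mult star (jstar mult star U x) y
      + sc (2^m) (jstar mult star (\<Phi> x) y) + sc (2^m) (jstar mult star x (\<Phi> y))" for x y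
  proof -
    let ?as = "replicate m one @ [x, y]"
    have h: "\<Phi> (jprod mult star ?as) = (\<Sum>k<n. jprod mult star (?as[k := \<Phi> (?as ! k)]))"
      using hyp[of x y] unfolding Let_def m_def .
    have lhs: "jprod mult star ?as = sc (2^m) (jstar mult star x y)" by (rule A.jprod_pre2)
    have tk: "jprod mult star (?as[k := \<Phi> (?as ! k)]) =
        jstar mult star (jstar mult star (jprod mult star ((replicate m one)[k := w])) x) y" if k: "k < m" for k
    proof -
      let ?L = "(replicate m one)[k := w]"
      have "?as ! k = one" using k by (simp add: nth_append)
      then have e1: "?as[k := \<Phi> (?as ! k)] = ?L @ [x, y]"
        using k by (simp add: w_def list_update_append1)
      have L: "?L \<noteq> []" using k by simp
      have e2: "?L @ [x, y] = (?L @ [x]) @ [y]" by simp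
      have "jprod mult star ((?L @ [x]) @ [y]) = jstar mult star (jprod mult star (?L @ [x])) y"
        by (rule A.jprod_snoc) simp
      also have "jprod mult star (?L @ [x]) = jstar mult star (jprod mult star ?L) x"
        by (rule A.jprod_snoc[OF L])
      finally show ?thesis unfolding e1 e2 .
    qed
    have tm: "jprod mult star (?as[m := \<Phi> (?as ! m)]) = sc (2^m) (jstar mult star (\<Phi> x) y)"
    proof -
      have "?as[m := \<Phi> (?as ! m)] = replicate m one @ [\<Phi> x, y]" by (simp add: nth_append list_update_append)
      then show ?thesis by (simp add: A.jprod_pre2)
    qed
    have tm1: "jprod mult star (?as[Suc m := \<Phi> (?as ! Suc m)]) = sc (2^m) (jstar mult star x (\<Phi> y))"
    proof -
      have "?as[Suc m := \<Phi> (?as ! Suc m)] = replicate m one @ [x, \<Phi> y]" by (simp add: nth_append list_update_append)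
      then show ?thesis by (simp add: A.jprod_pre2)
    qed
    have "(\<Sum>k<n. jprod mult star (?as[k := \<Phi> (?as ! k)])) =
        (\<Sum>k<m. jprod mult star (?as[k := \<Phi> (?as ! k)])) + jprod mult star (?as[m := \<Phi> (?as ! m)])
        + jprod mult star (?as[Suc m := \<Phi> (?as ! Suc m)])"
      unfolding nm by simp
    also have "(\<Sum>k<m. jprod mult star (?as[k := \<Phi> (?as ! k)])) =
        (\<Sum>k<m. jstar mult star (jstar mult star (jprod mult star ((replicate m one)[k := w])) x) y)"
      by (rule sum.cong) (simp_all add: tk)
    also have "... = jstar mult star (jstar mult star U x) y"
      unfolding U_def by (simp add: A.sum_jl)
    finally show ?thesis using h lhs tm tm1 by simp
  qed
  interpret S: setting sc mult star one e \<Phi> "(2::complex)^m" U "2^m" \<alpha> \<beta>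
  proof
    show "mult e e = e" by (rule e_idem)
    show "star e = e" by (rule e_sym)
    show "\<And>x. \<forall>a. mult (mult x a) e = 0 \<Longrightarrow> x = 0" by (rule cond_i)
    show "\<And>x. \<forall>a. mult (mult x a) (one - e) = 0 \<Longrightarrow> x = 0" by (rule cond_ii)
    show "\<And>x y. \<Phi> (sc (2 ^ m) (jstar mult star x y)) = jstar mult star (jstar mult star U x) y
      + sc (2 ^ m) (jstar mult star (\<Phi> x) y) + sc (2 ^ m) (jstar mult star x (\<Phi> y))" by (rule H)
    show "(2::complex) ^ m = of_nat (2 ^ m)" by simp
    show "0 < (2::nat) ^ m" by simp
    show "U = sc (of_nat \<alpha>) (\<Phi> one) + sc (of_nat \<beta>) (star (\<Phi> one))" using Uf w_def by simp
  qed
  show ?thesis by (rule S.final)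
qed

end
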